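(* Let $N\ge1$. Let $f_{\mathrm{prod}}:\mathbb{N}^N\to\mathbb{N}$ be $f_{\mathrm{prod}}(\mathbf{s})=s_1s_2\cdots s_N$, and let $g:\mathbb{N}^N\to\mathbb{N}$ be the indicator function of $\{1,2\}^N=\{(s_1,\dots,s_N): s_i\in\{1,2\}\}$. Then for every integer $\ell>0$, $$c_{f_{\mathrm{prod}}}(\ell\mathbf{1})=c_g((2\ell-1)\mathbf{1}),$$ where $\mathbf{1}=(1,\dots,1)\in\mathbb{N}^N$.
   Context: $\mathbb{N}=\{0,1,2,\dots\}$. For $h:\mathbb{N}^N\to\mathbb{N}$ with $h(\mathbf{0})=0$, $k\ge0$ and $\mathbf{x}\in\mathbb{N}^N$, $\binom{k}{\mathbf{x}}_h=\sum_{\mathbf{m}_1+\cdots+\mathbf{m}_k=\mathbf{x}} h(\mathbf{m}_1)\cdots h(\mathbf{m}_k)$ over tuples of vectors in $\mathbb{N}^N$, and $c_h(\mathbf{x})=\sum_{k\ge0}\binom{k}{\mathbf{x}}_h$ (the number of $h$-weighted vector compositions of $\mathbf{x}$, where a part $\mathbf{m}$ can take one of $h(\mathbf{m})$ colors). *)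

theory Defs
  imports "HOL-Analysis.Analysis"
begin

text \<open>Vectors in \<open>\<nat>^N\<close> are represented as functions \<open>nat \<Rightarrow> nat\<close> with coordinates
  \<open>0..N-1\<close>, vanishing at all indices \<open>\<ge> N\<close>.\<close>

definition vecs :: "nat \<Rightarrow> (nat \<Rightarrow> nat) set" where
  "vecs N = {v. \<forall>i\<ge>N. v i = 0}"

definition binom_h :: "nat \<Rightarrow> ((nat \<Rightarrow> nat) \<Rightarrow> nat) \<Rightarrow> nat \<Rightarrow> (nat \<Rightarrow> nat) \<Rightarrow> nat" where
  "binom_h N h k x =
     (\<Sum>ms \<in> {ms. length ms = k \<and> set ms \<subseteq> vecs N \<and> (\<forall>i. (\<Sum>m\<leftarrow>ms. m i) = x i)}.
        (\<Prod>m\<leftarrow>ms. h m))"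

definition comp_count :: "nat \<Rightarrow> ((nat \<Rightarrow> nat) \<Rightarrow> nat) \<Rightarrow> (nat \<Rightarrow> nat) \<Rightarrow> nat" where
  "comp_count N h x = (\<Sum>\<^sub>\<infinity>k. binom_h N h k x)"

definition f_prod :: "nat \<Rightarrow> (nat \<Rightarrow> nat) \<Rightarrow> nat" where
  "f_prod N s = (\<Prod>i<N. s i)"

definition g12 :: "nat \<Rightarrow> (nat \<Rightarrow> nat) \<Rightarrow> nat" where
  "g12 N s = (if \<forall>i<N. s i \<in> {1, 2} then 1 else 0)"

definition constvec :: "nat \<Rightarrow> nat \<Rightarrow> (nat \<Rightarrow> nat)" where
  "constvec N a = (\<lambda>i. if i < N then a else 0)"

end

theory Submission
  imports Defs "HOL-Library.FuncSet"
begin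

definition Sset :: "nat \<Rightarrow> nat \<Rightarrow> (nat \<Rightarrow> nat) \<Rightarrow> (nat \<Rightarrow> nat) list set" where
  "Sset N k x = {ms. length ms = k \<and> set ms \<subseteq> vecs N \<and> (\<forall>i. (\<Sum>m\<leftarrow>ms. m i) = x i)}"

definition Dset :: "nat \<Rightarrow> (nat \<Rightarrow> nat) \<Rightarrow> (nat \<Rightarrow> nat) set" where
  "Dset N x = {m \<in> vecs N. \<forall>i. m i \<le> x i}"

lemma binom_Sset: "binom_h N h k x = (\<Sum>ms\<in>Sset N k x. \<Prod>m\<leftarrow>ms. h m)"
  unfolding binom_h_def Sset_def by simp

lemma Dset_image:
  assumes "x \<in> vecs N"
  shows "Dset N x = (\<lambda>p i. if i < N then p i else 0) ` PiE {..<N} (\<lambda>i. {..x i})"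
proof (intro equalityI subsetI)
  fix m assume m: "m \<in> Dset N x"
  hence "m = (\<lambda>i. if i < N then restrict m {..<N} i else 0)"
    by (auto simp: Dset_def vecs_def)
  moreover have "restrict m {..<N} \<in> PiE {..<N} (\<lambda>i. {..x i})"
    using m by (auto simp: Dset_def)
  ultimately show "m \<in> (\<lambda>p i. if i < N then p i else 0) ` PiE {..<N} (\<lambda>i. {..x i})"
    by blast
next
  fix m assume "m \<in> (\<lambda>p i. if i < N then p i else 0) ` PiE {..<N} (\<lambda>i. {..x i})"
  then show "m \<in> Dset N x" using assms
    by (auto simp: Dset_def vecs_def PiE_def Pi_def)
qed

lemma finite_Dset: "x \<in> vecs N \<Longrightarrow> finite (Dset N x)"
  by (simp add: Dset_image finite_PiE)

lemma Sset_sub: "Sset N k x \<subseteq> {ms. set ms \<subseteq> Dset N x \<and> length ms = k}"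
proof
  fix ms assume ms: "ms \<in> Sset N k x"
  have "m i \<le> x i" if "m \<in> set ms" for m i
  proof -
    have "m i \<in> set (map (\<lambda>m. m i) ms)" using that by simp
    hence "m i \<le> (\<Sum>m\<leftarrow>ms. m i)" by (rule member_le_sum_list) auto
    thus ?thesis using ms by (simp add: Sset_def)
  qed
  thus "ms \<in> {ms. set ms \<subseteq> Dset N x \<and> length ms = k}"
    using ms by (auto simp: Sset_def Dset_def)
qed

lemma finite_Sset: "x \<in> vecs N \<Longrightarrow> finite (Sset N k x)"
  by (rule finite_subset[OF Sset_sub finite_lists_length_eq[OF finite_Dset]])

lemma Sset_Suc:
  assumes "x \<in> vecs N"
  shows "Sset N (Suc k) x = (\<lambda>(m, ms). m # ms) ` (SIGMA m:Dset N x. Sset N k (\<lambda>i. x i - m i))"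
proof (intro equalityI subsetI)
  fix ms assume ms: "ms \<in> Sset N (Suc k) x"
  then obtain m ms' where e: "ms = m # ms'" by (cases ms) (auto simp: Sset_def)
  have s: "m i + (\<Sum>m\<leftarrow>ms'. m i) = x i" for i using ms e by (auto simp: Sset_def)
  have "m \<in> Dset N x" using ms e s by (auto simp: Sset_def Dset_def intro: le_add1[THEN order_trans] )
       (metis le_add1)
  moreover have "ms' \<in> Sset N k (\<lambda>i. x i - m i)" using ms e s by (auto simp: Sset_def) (metis add_diff_cancel_left')
  ultimately show "ms \<in> (\<lambda>(m, ms). m # ms) ` (SIGMA m:Dset N x. Sset N k (\<lambda>i. x i - m i))"
    using e by auto
next
  fix ms assume "ms \<in> (\<lambda>(m, ms). m # ms) ` (SIGMA m:Dset N x. Sset N k (\<lambda>i. x i - m i))"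
  then obtain m ms' where e: "ms = m # ms'" and m: "m \<in> Dset N x" and ms': "ms' \<in> Sset N k (\<lambda>i. x i - m i)"
    by auto
  show "ms \<in> Sset N (Suc k) x" using e m ms' by (auto simp: Sset_def Dset_def)
qed

fun compB :: "(nat \<Rightarrow> nat) \<Rightarrow> nat \<Rightarrow> nat \<Rightarrow> nat" where
  "compB \<phi> 0 n = (if n = 0 then 1 else 0)"
| "compB \<phi> (Suc k) n = (\<Sum>j\<le>n. \<phi> j * compB \<phi> k (n - j))"

lemma binom_prod:
  assumes "x \<in> vecs N"
  shows "binom_h N (\<lambda>m. \<Prod>i<N. \<phi> (m i)) k x = (\<Prod>i<N. compB \<phi> k (x i))"
  using assms
proof (induction k arbitrary: x)
  case 0
  have "Sset N 0 x = (if \<forall>i<N. x i = 0 then {[]} else {})"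
    using 0 by (auto simp: Sset_def vecs_def) (metis not_le)
  then show ?case
    by (auto simp: binom_Sset)
next
  case (Suc k)
  let ?h = "\<lambda>m. \<Prod>i<N. \<phi> (m i)"
  let ?e = "\<lambda>p i. if i < N then p i else (0::nat)"
  have xm: "(\<lambda>i. x i - m i) \<in> vecs N" for m using Suc.prems by (simp add: vecs_def)
  have inj: "inj_on (\<lambda>(m, ms). m # ms) X" for X :: "((nat \<Rightarrow> nat) \<times> (nat \<Rightarrow> nat) list) set"
    by (auto simp: inj_on_def)
  have "binom_h N ?h (Suc k) x = (\<Sum>ms\<in>(\<lambda>(m, ms). m # ms) ` (SIGMA m:Dset N x. Sset N k (\<lambda>i. x i - m i)). prod_list (map ?h ms))"
    by (simp add: binom_Sset Sset_Suc[OF Suc.prems])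
  also have "\<dots> = (\<Sum>(m,ms)\<in>(SIGMA m:Dset N x. Sset N k (\<lambda>i. x i - m i)). ?h m * prod_list (map ?h ms))"
    by (subst sum.reindex[OF inj]) (simp add: case_prod_beta)
  also have "\<dots> = (\<Sum>m\<in>Dset N x. \<Sum>ms\<in>Sset N k (\<lambda>i. x i - m i). ?h m * prod_list (map ?h ms))"
    by (rule sum.Sigma[symmetric]) (auto simp: finite_Dset[OF Suc.prems] finite_Sset[OF xm])
  also have "\<dots> = (\<Sum>m\<in>Dset N x. ?h m * binom_h N ?h k (\<lambda>i. x i - m i))"
    by (simp add: binom_Sset sum_distrib_left)
  also have "\<dots> = (\<Sum>m\<in>Dset N x. \<Prod>i<N. \<phi> (m i) * compB \<phi> k (x i - m i))"
    by (simp add: Suc.IH[OF xm] prod.distrib)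
  also have "\<dots> = (\<Sum>p\<in>PiE {..<N} (\<lambda>i. {..x i}). \<Prod>i<N. \<phi> (p i) * compB \<phi> k (x i - p i))"
  proof -
    have "inj_on ?e (PiE {..<N} (\<lambda>i. {..x i}))"
    proof (rule inj_onI)
      fix p q assume p: "p \<in> PiE {..<N} (\<lambda>i. {..x i})" and q: "q \<in> PiE {..<N} (\<lambda>i. {..x i})"
        and e: "?e p = ?e q"
      show "p = q"
      proof
        fix i show "p i = q i"
          using p q fun_cong[OF e, of i] by (cases "i < N") (auto simp: PiE_def extensional_def)
      qed
    qed
    then show ?thesis
      by (simp add: Dset_image[OF Suc.prems] sum.reindex)
  qed
  also have "\<dots> = (\<Prod>i<N. \<Sum>j\<le>x i. \<phi> j * compB \<phi> k (x i - j))"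
    by (rule prod_sum_PiE[symmetric]) auto
  finally show ?case by simp
qed

lemma hockey: "(\<Sum>j\<le>n. (j + k) choose (2 * k + 1)) = (n + k + 1) choose (2 * k + 2)"
proof (induction n)
  case 0 then show ?case by (simp add: binomial_eq_0)
next
  case (Suc n)
  have "(n + k + 2) choose (2 * k + 2) = ((n + k + 1) choose (2 * k + 2)) + ((n+k+1) choose (2 * k + 1))"
    using binomial_Suc_Suc[of "n+k+1" "2 * k + 1"] by simp
  then show ?case using Suc by simp
qed

lemma Gsum: "(\<Sum>j\<le>n. (n - j) * ((j + k) choose (2 * k + 1))) = (n + k + 1) choose (2 * k + 3)"
proof (induction n)
  case 0 then show ?case by (simp add: binomial_eq_0)
next
  case (Suc n)
  have "(\<Sum>j\<le>Suc n. (Suc n - j) * ((j + k) choose (2 * k + 1)))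
      = (\<Sum>j\<le>n. (Suc n - j) * ((j + k) choose (2 * k + 1)))" by simp
  also have "\<dots> = (\<Sum>j\<le>n. (n - j) * ((j + k) choose (2 * k + 1)) + ((j + k) choose (2 * k + 1)))"
    by (rule sum.cong) (auto simp: Suc_diff_le)
  also have "\<dots> = ((n + k + 1) choose (2 * k + 3)) + ((n + k + 1) choose (2 * k + 2))"
    by (simp only: sum.distrib Suc hockey)
  also have "\<dots> = (Suc n + k + 1) choose (2 * k + 3)"
  proof -
    have e: "Suc n + k + 1 = Suc (n + k + 1)" "2 * k + 3 = Suc (2 * k + 2)" by simp_all
    show ?thesis unfolding e
      using binomial_Suc_Suc[of "n+k+1" "2 * k + 2"] by linarith
  qed
  finally show ?case .
qed

lemma Fsum: "(\<Sum>j\<le>n. j * ((n - j + k) choose (2 * k + 1))) = (n + k + 1) choose (2 * k + 3)"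
proof -
  have "(\<Sum>j\<le>n. j * ((n - j + k) choose (2 * k + 1))) = (\<Sum>j\<le>n. (n - j) * ((j + k) choose (2 * k + 1)))"
    by (rule sum.reindex_bij_witness[where i="\<lambda>j. n - j" and j="\<lambda>j. n - j"]) auto
  then show ?thesis using Gsum[of n k] by simp
qed

lemma compB_id: "compB (\<lambda>j. j) (Suc k) n = (n + k) choose (2 * k + 1)"
proof (induction k arbitrary: n)
  case 0
  have "(\<Sum>j\<le>n. j * (if n - j = 0 then 1 else 0)) = (\<Sum>j\<in>{n}. j)"
    by (rule sum.mono_neutral_cong_right) auto
  then show ?case by simp
next
  case (Suc k)
  have "compB (\<lambda>j. j) (Suc (Suc k)) n = (\<Sum>j\<le>n. j * ((n - j + k) choose (2 * k + 1)))"
    by (subst compB.simps(2), rule sum.cong) (auto simp: Suc simp del: compB.simps)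
  also have "\<dots> = (n + k + 1) choose (2 * k + 3)" by (rule Fsum)
  also have "\<dots> = (n + Suc k) choose (2 * Suc k + 1)"
  proof -
    have "n + Suc k = n + k + 1" "2 * Suc k + 1 = 2 * k + 3" by simp_all
    then show ?thesis by (simp only:)
  qed
  finally show ?case .
qed

definition phi12 :: "nat \<Rightarrow> nat" where
  "phi12 j = (if j \<in> {1, 2} then 1 else 0)"

lemma phi12_sum:
  "(\<Sum>j\<le>n. phi12 j * g (n - j)) = (if 1 \<le> n then g (n - 1) else 0) + (if 2 \<le> n then g (n - 2) else 0)"
proof -
  have "(\<Sum>j\<le>n. phi12 j * g (n - j)) = (\<Sum>j\<in>{..n}. if j \<in> {1,2} then g (n - j) else 0)"
    by (rule sum.cong) (auto simp: phi12_def)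
  also have "\<dots> = (\<Sum>j\<in>{..n} \<inter> {1,2}. g (n - j))"
    by (rule sum.inter_restrict[symmetric]) simp
  finally have "(\<Sum>j\<le>n. phi12 j * g (n - j)) = (\<Sum>j\<in>{..n} \<inter> {1,2}. g (n - j))" .
  moreover have "n = 0 \<or> n = 1 \<or> n \<ge> 2" by auto
  moreover have "n \<ge> 2 \<Longrightarrow> {..n} \<inter> {1,2} = {1,2}" by auto
  moreover have "{..1::nat} \<inter> {1,2} = {1}" by auto
  ultimately show ?thesis by auto
qed

lemma compB_12: "compB phi12 k n = (if k \<le> n then k choose (n - k) else 0)"
proof (induction k arbitrary: n)
  case 0 then show ?case by simp
next
  case (Suc k)
  have rec: "compB phi12 (Suc k) n = (if 1 \<le> n then compB phi12 k (n - 1) else 0) + (if 2 \<le> n then compB phi12 k (n - 2) else 0)"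
    by (subst compB.simps(2), rule phi12_sum)
  note IH = Suc.IH
  show ?case
  proof (cases "Suc k \<le> n")
    case True
    then obtain d where n: "n = Suc k + d" by (metis le_add_diff_inverse)
    show ?thesis
    proof (cases d)
      case 0
      then show ?thesis using n by (subst rec) (auto simp: IH)
    next
      case (Suc d')
      then show ?thesis using n
        by (subst rec) (auto simp: IH)
    qed
  next
    case False
    then show ?thesis by (subst rec) (auto simp: IH)
  qed
qed

lemma infsum_fin:
  fixes f :: "nat \<Rightarrow> nat"
  assumes "finite F" "\<And>k. k \<notin> F \<Longrightarrow> f k = 0"
  shows "infsum f UNIV = sum f F"
proof -
  have "infsum f UNIV = infsum f F"
    by (rule infsum_cong_neutral) (use assms in auto)
  then show ?thesis using assms(1) by simp
qed

lemma fprod_eq: "f_prod N = (\<lambda>m. \<Prod>i<N. (\<lambda>j. j) (m i))"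
  by (rule ext) (simp add: f_prod_def)

lemma g12_eq: "g12 N = (\<lambda>m. \<Prod>i<N. phi12 (m i))"
proof (rule ext)
  fix s :: "nat \<Rightarrow> nat"
  show "g12 N s = (\<Prod>i<N. phi12 (s i))"
  proof (cases "\<forall>i<N. s i \<in> {1, 2}")
    case True
    then show ?thesis by (simp add: g12_def phi12_def)
  next
    case False
    then obtain i where "i < N" "s i \<notin> {1,2}" by blast
    then have a: "(\<Prod>i<N. phi12 (s i)) = 0" by (intro prod_zero) (auto simp: phi12_def)
    have b: "g12 N s = 0" using False by (simp add: g12_def)
    show ?thesis by (simp only: a b)
  qed
qed

lemma binom_const:
  "binom_h N (\<lambda>m. \<Prod>i<N. \<phi> (m i)) k (constvec N a) = compB \<phi> k a ^ N"
proof -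
  have "constvec N a \<in> vecs N" by (simp add: vecs_def constvec_def)
  then have "binom_h N (\<lambda>m. \<Prod>i<N. \<phi> (m i)) k (constvec N a) = (\<Prod>i<N. compB \<phi> k (constvec N a i))"
    by (rule binom_prod)
  also have "\<dots> = (\<Prod>i<N. compB \<phi> k a)" by (rule prod.cong) (auto simp: constvec_def)
  finally show ?thesis by simp
qed

theorem theorem16:
  fixes N l :: nat
  assumes "N \<ge> 1" and "l > 0"
  shows "comp_count N (f_prod N) (constvec N l) = comp_count N (g12 N) (constvec N (2 * l - 1))"
proof -
  have N0: "N \<noteq> 0" using assms by simp
  have L: "comp_count N (f_prod N) (constvec N l) = (\<Sum>k'<l. ((l + k') choose (2 * k' + 1)) ^ N)"
  proof -
    have "comp_count N (f_prod N) (constvec N l) = infsum (\<lambda>k. compB (\<lambda>j. j) k l ^ N) UNIV"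
      unfolding comp_count_def using binom_const[of N "\<lambda>j. j"] by (simp add: fprod_eq)
    also have "\<dots> = sum (\<lambda>k. compB (\<lambda>j. j) k l ^ N) (Suc ` {..<l})"
    proof (rule infsum_fin)
      fix k assume k: "k \<notin> Suc ` {..<l}"
      show "compB (\<lambda>j. j) k l ^ N = 0"
      proof (cases k)
        case 0 then show ?thesis using assms N0 by simp
      next
        case (Suc k')
        then have "l \<le> k'" using k by auto
        then have "compB (\<lambda>j. j) k l = 0" unfolding Suc compB_id by (simp add: binomial_eq_0)
        then show ?thesis using N0 by simp
      qed
    qed simp
    also have "\<dots> = (\<Sum>k'<l. ((l + k') choose (2 * k' + 1)) ^ N)"
      by (subst sum.reindex) (auto simp del: compB.simps simp: compB_id add.commute)
    finally show ?thesis .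
  qed
  have R: "comp_count N (g12 N) (constvec N (2 * l - 1)) = (\<Sum>k'<l. ((k' + l) choose (l - 1 - k')) ^ N)"
  proof -
    have "comp_count N (g12 N) (constvec N (2 * l - 1)) = infsum (\<lambda>k. compB phi12 k (2 * l - 1) ^ N) UNIV"
      unfolding comp_count_def using binom_const[of N phi12] by (simp add: g12_eq)
    also have "\<dots> = sum (\<lambda>k. compB phi12 k (2 * l - 1) ^ N) ((\<lambda>k'. k' + l) ` {..<l})"
    proof (rule infsum_fin)
      fix k assume k: "k \<notin> (\<lambda>k'. k' + l) ` {..<l}"
      have "k < l \<or> k \<ge> 2 * l"
      proof (rule ccontr)
        assume "\<not> (k < l \<or> k \<ge> 2 * l)"
        then have "k - l < l" "k = (k - l) + l" by auto
        then show False using k by blast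
      qed
      then have "compB phi12 k (2 * l - 1) = 0"
        using assms(2) by (auto simp: compB_12 binomial_eq_0)
      then show "compB phi12 k (2 * l - 1) ^ N = 0" using N0 by simp
    qed simp
    also have "\<dots> = (\<Sum>k'<l. ((k' + l) choose (l - 1 - k')) ^ N)"
    proof -
      have "(\<Sum>k'<l. compB phi12 (k' + l) (2 * l - 1) ^ N) = (\<Sum>k'<l. ((k' + l) choose (l - 1 - k')) ^ N)"
        by (rule sum.cong) (auto simp: compB_12)
      then show ?thesis by (simp add: sum.reindex inj_on_def)
    qed
    finally show ?thesis .
  qed
  have "(\<Sum>k'<l. ((l + k') choose (2 * k' + 1)) ^ N) = (\<Sum>k'<l. ((k' + l) choose (l - 1 - k')) ^ N)"
  proof (rule sum.cong)
    fix k' assume "k' \<in> {..<l}"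
    then have "2 * k' + 1 \<le> l + k'" by simp
    then have "(l + k') choose (2 * k' + 1) = (l + k') choose (l + k' - (2 * k' + 1))"
      by (rule binomial_symmetric)
    also have "l + k' - (2 * k' + 1) = l - 1 - k'" by simp
    finally show "((l + k') choose (2 * k' + 1)) ^ N = ((k' + l) choose (l - 1 - k')) ^ N"
      by (simp add: add.commute)
  qed simp
  then show ?thesis using L R by simp
qed

end
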